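(* Consider BPSK transmission of a binary linear code over an AWGN channel with noise variance $\sigma^2$ (which determines the SNR), ML decoding with error event $E$, and a family of regions $\{\mathcal{R}(r), r\in\mathcal{I}\}$ satisfying assumptions A1–A3 of the context, with pdf $g$ of $R$ and a non-trivial conditional bound $f_u$ (i.e. $f_u(r)\le1$ for some $r$). Let $f_u(r)$ be a non-decreasing and continuous function of $r$. If $f_u$ does not depend on the SNR, then the optimal parameter $r_1$ minimizing over $r^*$ the bound $\int_{-\infty}^{r^*} f_u(r)g(r)\,{\rm d}r+\int_{r^*}^{+\infty}g(r)\,{\rm d}r$ does not depend on the SNR either.
   Context: System model: codeword bits $c_t$ of a binary linear code of length $n$ are mapped to $s_t=1-2c_t$; $\underline y=\underline s+\underline z$ with $\underline z$ i.i.d. $\mathcal{N}(0,\sigma^2)$; ML (nearest signal) decoding; the all-zero codeword's image $\underline s^{(0)}$ is transmitted; $E$ is the error event. Assumptions: (A1) regions nested ($\mathcal{R}(r_1)\subset\mathcal{R}(r_2)$ for $r_1<r_2$), with pairwise disjoint boundaries whose union over $r\in\mathcal{I}$ is $\mathbb{R}^n$. (A2) $R:\underline y\mapsto r$ for $\underline y\in\partial\mathcal{R}(r)$ has pdf $g(r)$ (set $g\equiv0$ outside $\mathcal{I}$). (A3) ${\rm Pr}\{E\mid\underline y\in\partial\mathcal{R}(r)\}\le f_u(r)$. *)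

theory Defs
  imports "HOL-Analysis.Analysis"
begin

definition is_pdf :: "(real \<Rightarrow> real) \<Rightarrow> bool" where
  "is_pdf g \<longleftrightarrow> g \<in> borel_measurable borel \<and> (\<forall>r. 0 \<le> g r)
     \<and> (\<integral>\<^sup>+ r. ennreal (g r) \<partial>lborel) = 1"

text \<open>The bound  int_{-inf}^{t} f(r) g(r) dr + int_{t}^{+inf} g(r) dr,  as a
  nonnegative (possibly infinite) integral; the threshold t ranges over the
  extended reals, so that t = +inf / -inf are the limiting choices.\<close>
definition ub_bound :: "(real \<Rightarrow> real) \<Rightarrow> (real \<Rightarrow> real) \<Rightarrow> ereal \<Rightarrow> ennreal" where
  "ub_bound f g t =
     (\<integral>\<^sup>+ r. ennreal (f r * g r) * indicator {r. ereal r \<le> t} r \<partial>lborel)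
   + (\<integral>\<^sup>+ r. ennreal (g r) * indicator {r. t < ereal r} r \<partial>lborel)"

end

theory Submission
  imports Defs
begin

lemma ub_split:
  fixes f g :: "real \<Rightarrow> real"
  assumes gm: "g \<in> borel_measurable borel" and fm: "f \<in> borel_measurable borel"
  shows "ub_bound f g t = (\<integral>\<^sup>+ r. ennreal (f r * g r) * indicator {r. ereal r \<le> t} r
            + ennreal (g r) * indicator {r. t < ereal r} r \<partial>lborel)"
  unfolding ub_bound_def
  by (rule nn_integral_add[symmetric]) (use gm fm in measurable)

lemma ub_min:
  fixes f g :: "real \<Rightarrow> real"
  assumes gm: "g \<in> borel_measurable borel" and fm: "f \<in> borel_measurable borel"
    and g0: "\<And>r. 0 \<le> g r" and f0: "\<And>r. 0 \<le> f r"
    and P1: "\<And>r. ereal r \<le> r1 \<Longrightarrow> f r \<le> 1"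
    and P2: "\<And>r. r1 < ereal r \<Longrightarrow> 1 \<le> f r"
  shows "ub_bound f g r1 \<le> ub_bound f g t"
  unfolding ub_split[OF gm fm]
proof (rule nn_integral_mono)
  fix r
  have a: "f r * g r \<le> g r" if "ereal r \<le> r1" using P1[OF that] g0[of r]
    using mult_right_mono[of "f r" 1 "g r"] by simp
  have b: "g r \<le> f r * g r" if "r1 < ereal r" using P2[OF that] g0[of r]
    by (simp add: mult_le_cancel_right1)
  show "ennreal (f r * g r) * indicator {r. ereal r \<le> r1} r + ennreal (g r) * indicator {r. r1 < ereal r} r
      \<le> ennreal (f r * g r) * indicator {r. ereal r \<le> t} r + ennreal (g r) * indicator {r. t < ereal r} r"
    using a b by (cases "ereal r \<le> r1"; cases "ereal r \<le> t")
       (auto simp: indicator_def not_le ennreal_leI)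
qed

theorem corollary1:
  fixes f :: "real \<Rightarrow> real"
    and g :: "real \<Rightarrow> real \<Rightarrow> real"
  assumes pdf: "\<And>\<sigma>. \<sigma> > 0 \<Longrightarrow> is_pdf (g \<sigma>)"
    and f_nonneg: "\<And>r. 0 \<le> f r"
    and f_mono: "mono f"
    and f_cont: "continuous_on UNIV f"
    and nontrivial: "\<exists>r. f r \<le> 1"
  shows "\<exists>r1 :: ereal. \<forall>\<sigma> > 0. \<forall>t. ub_bound f (g \<sigma>) r1 \<le> ub_bound f (g \<sigma>) t"
proof -
  define S where "S = {r. f r \<le> 1}"
  have fm: "f \<in> borel_measurable borel"
    using f_cont by (simp add: borel_measurable_continuous_onI)
  have cl: "closed S" unfolding S_def
    by (rule closed_Collect_le[OF f_cont]) auto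
  have ne: "S \<noteq> {}" using nontrivial S_def by auto
  obtain r1 :: ereal where P1: "\<And>r. ereal r \<le> r1 \<Longrightarrow> f r \<le> 1"
    and P2: "\<And>r. r1 < ereal r \<Longrightarrow> 1 \<le> f r"
  proof (cases "bdd_above S")
    case True
    have sS: "Sup S \<in> S" using closed_contains_Sup[OF ne True cl] .
    show ?thesis
    proof (rule that[of "ereal (Sup S)"])
      fix r assume "ereal r \<le> ereal (Sup S)"
      hence "f r \<le> f (Sup S)" using f_mono by (simp add: monoD)
      thus "f r \<le> 1" using sS S_def by auto
    next
      fix r assume "ereal (Sup S) < ereal r"
      hence "r \<notin> S" using cSup_upper[OF _ True, of r] by force
      thus "1 \<le> f r" using S_def by auto
    qed
  next
    case False
    show ?thesis
    proof (rule that[of "\<infinity>"])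
      fix r
      obtain s where "s \<in> S" "r < s" using False unfolding bdd_above_def
        by (meson not_le)
      thus "f r \<le> 1" using f_mono S_def by (auto dest: monoD[of f r s])
    qed auto
  qed
  show ?thesis
  proof (intro exI allI impI)
    fix \<sigma> :: real and t assume "\<sigma> > 0"
    from pdf[OF this] have "g \<sigma> \<in> borel_measurable borel" "\<And>r. 0 \<le> g \<sigma> r"
      by (auto simp: is_pdf_def)
    thus "ub_bound f (g \<sigma>) r1 \<le> ub_bound f (g \<sigma>) t"
      using ub_min[OF _ fm _ f_nonneg P1 P2] by blast
  qed
qed

end
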